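(* Let $\nu$ be a $\Psi$-invariant probability measure and let $F_n:\mathcal{Y}\to[-\infty,0]$, $n\in\mathbb{N}$, be measurable functions satisfying the separated subadditivity condition (S) (with integer times). Assume the limit $\lim_{n\to\infty}\frac1n\int_{\mathcal{Y}}F_n\,d\nu$ exists. Then $$\lim_{n\to\infty}\frac1n\int_{\mathcal{Y}}F_n\,d\nu\le\int_{\mathcal{Y}}\liminf_{n\to\infty}\frac{F_n(y)}{n}\,d\nu(y).$$
   Context: Discrete time: $(\mathcal{Y},\Psi,\nu)$ with $\Psi:\mathcal{Y}\to\mathcal{Y}$ measurable and $\nu$ $\Psi$-invariant. Condition (S): there exist $\ell_0\ge0$ and a non-increasing $\alpha:[\ell_0,\infty)\to[1,\infty)$ with $\lim_{\ell\to\infty}\alpha(\ell)=1$ such that for all $n\ge1$, all $t_1,\dots,t_n\in\mathbb{N}$, all integers $\ell>\ell_0$ and all $y$, $$F_{(n-1)\ell+\sum_{k=1}^nt_k}(y)\le\frac{1}{\alpha(\ell)}\sum_{k=1}^nF_{t_k}\big(\Psi^{(k-1)\ell+\sum_{j=1}^{k-1}t_j}y\big).$$ *)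

theory Defs
  imports "HOL-Probability.Probability"
begin

definition nonpos_integral :: "'a measure \<Rightarrow> ('a \<Rightarrow> ereal) \<Rightarrow> ereal" where
  "nonpos_integral M f = - enn2ereal (\<integral>\<^sup>+ x. e2ennreal (- f x) \<partial>M)"

end

theory Submission
  imports Defs
begin


lemma sum_shift_if:
  fixes t :: "nat \<Rightarrow> nat"
  shows "(\<Sum>j=1..Suc m. (if j = 1 then t0 else t (j - 1))) = t0 + (\<Sum>j=1..m. t j)"
proof -
  have "(\<Sum>j=1..Suc m. (if j = 1 then t0 else t (j - 1))) = t0 + (\<Sum>j=Suc 1..Suc m. (if j = 1 then t0 else t (j - 1)))"
    by (subst sum.atLeast_Suc_atMost) auto
  also have "(\<Sum>j=Suc 1..Suc m. (if j = 1 then t0 else t (j - 1))) = (\<Sum>j=1..m. t j)"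
    by (simp only: sum.shift_bounds_cl_Suc_ivl) simp
  finally show ?thesis .
qed

lemma extend_sum:
  fixes t :: "nat \<Rightarrow> nat" and Gp :: "nat \<Rightarrow> nat \<Rightarrow> 'b::comm_monoid_add"
  shows "(\<Sum>k=1..Suc n. Gp (if k = 1 then t0 else t (k - 1))
            (s + (k - 1) * l + (\<Sum>j=1..k-1. (if j = 1 then t0 else t (j - 1)))))
       = Gp t0 s + (\<Sum>k=1..n. Gp (t k) ((s + t0 + l) + (k - 1) * l + (\<Sum>j=1..k-1. t j)))"
proof -
  have "(\<Sum>k=1..Suc n. Gp (if k = 1 then t0 else t (k - 1))
            (s + (k - 1) * l + (\<Sum>j=1..k-1. (if j = 1 then t0 else t (j - 1)))))
      = Gp t0 s + (\<Sum>k=Suc 1..Suc n. Gp (if k = 1 then t0 else t (k - 1))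
            (s + (k - 1) * l + (\<Sum>j=1..k-1. (if j = 1 then t0 else t (j - 1)))))"
    by (subst sum.atLeast_Suc_atMost) auto
  also have "(\<Sum>k=Suc 1..Suc n. Gp (if k = 1 then t0 else t (k - 1))
            (s + (k - 1) * l + (\<Sum>j=1..k-1. (if j = 1 then t0 else t (j - 1)))))
     = (\<Sum>k=1..n. Gp (if Suc k = 1 then t0 else t (Suc k - 1))
            (s + (Suc k - 1) * l + (\<Sum>j=1..Suc k-1. (if j = 1 then t0 else t (j - 1)))))"
    by (subst sum.shift_bounds_cl_Suc_ivl[symmetric]) simp
  also have "\<dots> = (\<Sum>k=1..n. Gp (t k) ((s + t0 + l) + (k - 1) * l + (\<Sum>j=1..k-1. t j)))"
  proof (rule sum.cong[OF refl])
    fix k assume k: "k \<in> {1..n}"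
    then obtain m where m: "k = Suc m" by (cases k) auto
    show "Gp (if Suc k = 1 then t0 else t (Suc k - 1))
            (s + (Suc k - 1) * l + (\<Sum>j=1..Suc k-1. (if j = 1 then t0 else t (j - 1)))) =
          Gp (t k) ((s + t0 + l) + (k - 1) * l + (\<Sum>j=1..k-1. t j))"
      using sum_shift_if[of t0 t m] by (simp add: m algebra_simps)
  qed
  finally show ?thesis .
qed

lemma ennreal_add_ge: "ennreal (x + y) \<le> ennreal x + ennreal y"
proof (cases "x \<ge> 0 \<and> y \<ge> 0")
  case True then show ?thesis by (simp add: ennreal_plus)
next
  case False
  then consider "x < 0" | "y < 0" by linarith
  then show ?thesis
  proof cases
    case 1
    then have "ennreal (x + y) \<le> ennreal y" by (intro ennreal_leI) simp
    then show ?thesis by (simp add: add_increasing)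
  next
    case 2
    then have "ennreal (x + y) \<le> ennreal x" by (intro ennreal_leI) simp
    then show ?thesis by (simp add: add_increasing2)
  qed
qed

lemma cover:
  fixes Gp :: "nat \<Rightarrow> nat \<Rightarrow> ennreal" and good :: "nat \<Rightarrow> bool"
    and ph eps K :: real and l m0 M N :: nat
  assumes m0: "1 \<le> m0" and ph: "ph \<le> K" and eps: "0 \<le> eps" and K: "0 \<le> K"
    and good: "\<And>j. good j \<Longrightarrow> \<exists>t. m0 \<le> t \<and> t \<le> M \<and> ennreal (real t * (ph - eps)) \<le> Gp t j"
  shows "s < N \<Longrightarrow> \<exists>n t. 1 \<le> n \<and> (\<forall>k\<in>{1..n}. 1 \<le> t k) \<and> (n - 1) * l + (\<Sum>k=1..n. t k) = N - s \<and>
      ennreal (real (N - s) * (ph - eps) - K * (real l * real (N - s) / real m0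
          + real (l + 1) * real (card {j\<in>{s..<N}. \<not> good j}) + real (M + l + 1)))
      \<le> (\<Sum>k=1..n. Gp (t k) (s + (k - 1) * l + (\<Sum>j=1..k-1. t j)))"
proof (induction "N - s" arbitrary: s rule: less_induct)
  case less
  define c where "c s = real (card {j\<in>{s..<N}. \<not> good j})" for s
  define A where "A s = real (N - s) * (ph - eps) - K * (real l * real (N - s) / real m0
          + real (l + 1) * c s + real (M + l + 1))" for s
  have c0: "c s \<ge> 0" for s by (simp add: c_def)
  show ?case
  proof (cases "N \<le> s + M + l + 1")
    case True
    have "real (N - s) * (ph - eps) \<le> real (N - s) * K"
      using ph eps by (intro mult_left_mono) auto
    also have "\<dots> \<le> real (M + l + 1) * K"
      using True K by (intro mult_right_mono) auto
    also have "\<dots> \<le> K * (real l * real (N - s) / real m0 + real (l + 1) * c s + real (M + l + 1))"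
      using K c0 m0 by (simp add: algebra_simps add_nonneg_nonneg mult_nonneg_nonneg)
    finally have "A s \<le> 0" by (simp add: A_def)
    then have "ennreal (A s) = 0" by (simp add: ennreal_neg)
    then show ?thesis
      using less.prems
      by (intro exI[of _ 1] exI[of _ "\<lambda>k. N - s"]) (simp add: A_def c_def)
  next
    case False
    have step: "\<exists>n t. 1 \<le> n \<and> (\<forall>k\<in>{1..n}. 1 \<le> t k) \<and> (n - 1) * l + (\<Sum>k=1..n. t k) = N - s \<and>
       ennreal (A s) \<le> (\<Sum>k=1..n. Gp (t k) (s + (k - 1) * l + (\<Sum>j=1..k-1. t j)))"
      if t0: "1 \<le> t0" "t0 \<le> Suc M" and r: "ennreal r \<le> Gp t0 s"
        and Ar: "A s \<le> r + A (s + t0 + l)" for t0 r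
    proof -
      define s' where "s' = s + t0 + l"
      have s'N: "s' < N" using False t0 by (simp add: s'_def)
      have "N - s' < N - s" using s'N t0 by (simp add: s'_def)
      from less.hyps[OF this s'N] obtain n t where
        n: "1 \<le> n" and t: "\<forall>k\<in>{1..n}. 1 \<le> t k" and sum: "(n - 1) * l + (\<Sum>k=1..n. t k) = N - s'"
        and ineq: "ennreal (A s') \<le> (\<Sum>k=1..n. Gp (t k) (s' + (k - 1) * l + (\<Sum>j=1..k-1. t j)))"
        unfolding A_def c_def by blast
      define t' where "t' k = (if k = 1 then t0 else t (k - 1))" for k
      have "(Suc n - 1) * l + (\<Sum>k=1..Suc n. t' k) = N - s"
        using sum_shift_if[of t0 t n] sum s'N n unfolding t'_def s'_def
        by (cases n) (auto simp: algebra_simps)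
      moreover have "\<forall>k\<in>{1..Suc n}. 1 \<le> t' k"
      proof
        fix k assume "k \<in> {1..Suc n}"
        moreover have "k \<noteq> 1 \<Longrightarrow> k - 1 \<in> {1..n}" using \<open>k \<in> _\<close> by auto
        ultimately show "1 \<le> t' k" using t t0 by (cases "k = 1") (auto simp: t'_def)
      qed
      moreover have "ennreal (A s) \<le> (\<Sum>k=1..Suc n. Gp (t' k) (s + (k - 1) * l + (\<Sum>j=1..k-1. t' j)))"
      proof -
        have "ennreal (A s) \<le> ennreal (r + A s')" using Ar by (simp add: s'_def ennreal_leI)
        also have "\<dots> \<le> ennreal r + ennreal (A s')" by (rule ennreal_add_ge)
        also have "\<dots> \<le> Gp t0 s + (\<Sum>k=1..n. Gp (t k) (s' + (k - 1) * l + (\<Sum>j=1..k-1. t j)))"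
          using r ineq by (rule add_mono)
        also have "\<dots> = (\<Sum>k=1..Suc n. Gp (t' k) (s + (k - 1) * l + (\<Sum>j=1..k-1. t' j)))"
          unfolding t'_def s'_def by (rule extend_sum[symmetric])
        finally show ?thesis .
      qed
      ultimately show ?thesis by (intro exI[of _ "Suc n"] exI[of _ t']) auto
    qed
    show ?thesis
    proof (cases "good s")
      case True
      then obtain t0 where t0: "m0 \<le> t0" "t0 \<le> M" "ennreal (real t0 * (ph - eps)) \<le> Gp t0 s"
        using good by blast
      have "c (s + t0 + l) \<le> c s"
        unfolding c_def by (intro of_nat_mono card_mono) auto
      have "K * real l \<le> K * (real l * real (t0 + l) / real m0)"
      proof -
        have h: "real l * real m0 \<le> real l * real (t0 + l)" using t0 by (intro mult_left_mono) auto
        have "real l \<le> real l * real (t0 + l) / real m0" using h m0 by (simp add: le_divide_eq)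
        then show ?thesis using K by (intro mult_left_mono) auto
      qed
      have Ns: "real (N - s) = real (N - (s + t0 + l)) + real (t0 + l)" using False t0 by auto
      have e1: "K * (real l * real (N - s) / real m0) = K * (real l * real (N - (s + t0 + l)) / real m0)
          + K * (real l * real (t0 + l) / real m0)" unfolding Ns by (simp add: ring_distribs add_divide_distrib)
      have e2: "real (N - s) * (ph - eps) = real (N - (s + t0 + l)) * (ph - eps) + real t0 * (ph - eps) + real l * (ph - eps)"
        unfolding Ns by (simp add: algebra_simps)
      have e3: "real l * (ph - eps) \<le> K * real l" using ph eps by (subst mult.commute, intro mult_left_mono) auto
      have e4: "K * (real (l + 1) * c (s + t0 + l)) \<le> K * (real (l + 1) * c s)"
        using K \<open>c (s + t0 + l) \<le> c s\<close> by (intro mult_left_mono) auto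
      have "A s \<le> real t0 * (ph - eps) + A (s + t0 + l)"
        unfolding A_def using e1 e2 e3 e4 \<open>K * real l \<le> _\<close> by (simp add: algebra_simps)
      from step[OF _ le_SucI[OF t0(2)] t0(3) this] t0 m0 show ?thesis unfolding A_def c_def by auto
    next
      case bad: False
      have cs1: "c s \<ge> c (s + 1 + l) + 1"
      proof -
        have "insert s {j\<in>{s + 1 + l..<N}. \<not> good j} \<subseteq> {j\<in>{s..<N}. \<not> good j}"
          using bad False by auto
        then have "card (insert s {j\<in>{s + 1 + l..<N}. \<not> good j}) \<le> card {j\<in>{s..<N}. \<not> good j}"
          by (intro card_mono) auto
        then show ?thesis unfolding c_def by simp
      qed
      have Ns: "real (N - s) = real (N - (s + 1 + l)) + real (1 + l)" using False by auto
      have e1: "K * (real l * real (N - s) / real m0) = K * (real l * real (N - (s + 1 + l)) / real m0)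
          + K * (real l * real (1 + l) / real m0)" unfolding Ns by (simp add: ring_distribs add_divide_distrib)
      have e1': "K * (real l * real (1 + l) / real m0) \<ge> 0" using K by simp
      have e2: "real (N - s) * (ph - eps) = real (N - (s + 1 + l)) * (ph - eps) + real (1 + l) * (ph - eps)"
        unfolding Ns by (simp add: algebra_simps)
      have e3: "real (1 + l) * (ph - eps) \<le> K * real (1 + l)" using ph eps by (subst mult.commute, intro mult_left_mono) auto
      have e4: "K * (real (l + 1) * c (s + 1 + l)) + K * real (1 + l) \<le> K * (real (l + 1) * c s)"
      proof -
        have "real (l+1) * (c (s + 1 + l) + 1) \<le> real (l+1) * c s" using cs1 by (intro mult_left_mono) auto
        then have "real (l + 1) * c (s + 1 + l) + real (1 + l) \<le> real (l + 1) * c s" by (simp add: algebra_simps)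
        then have "K * (real (l + 1) * c (s + 1 + l) + real (1 + l)) \<le> K * (real (l + 1) * c s)"
          using K by (rule mult_left_mono)
        then show ?thesis by (simp add: distrib_left)
      qed
      have "A s \<le> 0 + A (s + 1 + l)"
        unfolding A_def using e1 e1' e2 e3 e4 by (simp add: algebra_simps)
      from step[OF _ _ _ this] bad False show ?thesis unfolding A_def c_def by auto
    qed
  qed
qed

lemma uminus_add_ereal_nonpos: "a \<le> 0 \<Longrightarrow> b \<le> 0 \<Longrightarrow> - (a + b) = - a + - (b::ereal)"
  by (cases a; cases b) auto

lemma sum_nonpos_ereal: "(\<forall>i\<in>I. f i \<le> 0) \<Longrightarrow> (\<Sum>i\<in>I. f i) \<le> (0::ereal)"
  by (induct I rule: infinite_finite_induct) (auto intro: add_nonpos_nonpos)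

lemma sum_uminus_ereal: "(\<forall>i\<in>I. f i \<le> 0) \<Longrightarrow> (\<Sum>i\<in>I. - f i) = - (\<Sum>i\<in>I. f i :: ereal)"
proof (induct I rule: infinite_finite_induct)
  case (insert x I)
  then show ?case using sum_nonpos_ereal[of I f] by (simp add: uminus_add_ereal_nonpos)
qed auto

lemma SUP_min_of_nat: "(SUP K::nat. min x (of_nat K :: ennreal)) = x"
proof -
  have "(SUP K::nat. min x (of_nat K :: ennreal)) = inf x (SUP K::nat. of_nat K)"
    using inf_SUP[of x "of_nat" UNIV] unfolding inf_min by simp
  also have "\<dots> = x" by (simp add: ennreal_SUP_of_nat_eq_top)
  finally show ?thesis .
qed

lemma mono_e2ennreal: "mono e2ennreal"
  by (auto simp: mono_def intro: e2ennreal_mono)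

lemma ennreal_integral_le_nn_integral:
  assumes "integrable M f"
  shows "ennreal (integral\<^sup>L M f) \<le> (\<integral>\<^sup>+x. ennreal (f x) \<partial>M)"
proof -
  have "integral\<^sup>L M f \<le> integral\<^sup>L M (\<lambda>x. max (f x) 0)"
    using assms by (intro integral_mono) auto
  then have "ennreal (integral\<^sup>L M f) \<le> ennreal (integral\<^sup>L M (\<lambda>x. max (f x) 0))"
    by (rule ennreal_leI)
  also have "\<dots> = (\<integral>\<^sup>+x. ennreal (max (f x) 0) \<partial>M)"
    using assms by (intro nn_integral_eq_integral[symmetric]) auto
  also have "\<dots> = (\<integral>\<^sup>+x. ennreal (f x) \<partial>M)"
    by (intro nn_integral_cong) (auto simp: max_def ennreal_neg)
  finally show ?thesis .
qed

lemma card_indicator_sum: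
  fixes N :: nat
  shows "(\<Sum>j<N. indicator B (f j) :: real) = real (card {j\<in>{0..<N}. f j \<in> B})"
proof -
  have "(\<Sum>j<N. indicator B (f j) :: real) = (\<Sum>j<N. if f j \<in> B then 1 else 0)"
    by (simp add: indicator_def of_bool_def)
  also have "\<dots> = (\<Sum>j\<in>{j\<in>{..<N}. f j \<in> B}. 1)"
    by (rule sum.inter_filter[symmetric]) simp
  also have "\<dots> = real (card {j\<in>{..<N}. f j \<in> B})" by simp
  also have "{j\<in>{..<N}. f j \<in> B} = {j\<in>{0..<N}. f j \<in> B}" by auto
  finally show ?thesis .
qed

locale sys =
  fixes M :: "'a measure" and \<Psi> :: "'a \<Rightarrow> 'a" and F :: "nat \<Rightarrow> 'a \<Rightarrow> ereal"
    and l0 :: real and \<alpha> :: "real \<Rightarrow> real"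
  assumes prob: "prob_space M"
    and meas_\<Psi>: "\<Psi> \<in> M \<rightarrow>\<^sub>M M"
    and inv: "distr M M \<Psi> = M"
    and meas_F: "\<And>n. F n \<in> borel_measurable M"
    and F_nonpos: "\<And>n y. y \<in> space M \<Longrightarrow> F n y \<le> 0"
    and l0_nonneg: "l0 \<ge> 0"
    and \<alpha>_ge1: "\<And>l. l \<ge> l0 \<Longrightarrow> \<alpha> l \<ge> 1"
    and \<alpha>_lim: "(\<alpha> \<longlongrightarrow> 1) at_top"
    and S: "\<And>n (t :: nat \<Rightarrow> nat) (l :: nat) y.
              n \<ge> 1 \<Longrightarrow> (\<forall>k\<in>{1..n}. t k \<ge> 1) \<Longrightarrow> real l > l0 \<Longrightarrow> y \<in> space M \<Longrightarrow>
              F ((n - 1) * l + (\<Sum>k=1..n. t k)) y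
                \<le> ereal (1 / \<alpha> (real l)) *
                   (\<Sum>k=1..n. F (t k) ((\<Psi> ^^ ((k - 1) * l + (\<Sum>j=1..k-1. t j))) y))"
begin

definition G where "G n y = e2ennreal (- F n y)"

lemma G_meas[measurable]: "G n \<in> borel_measurable M"
  unfolding G_def using meas_F[of n] by measurable

lemma funpow_meas[measurable]: "\<Psi> ^^ n \<in> M \<rightarrow>\<^sub>M M"
proof (induct n)
  case 0 then show ?case by (simp add: measurable_ident_sets id_def)
next
  case (Suc n) then show ?case unfolding funpow_Suc_right by (rule measurable_comp[OF meas_\<Psi>])
qed

lemma funpow_space: "y \<in> space M \<Longrightarrow> (\<Psi> ^^ n) y \<in> space M"
  using measurable_space[OF funpow_meas] .

lemma distr_funpow: "distr M M (\<Psi> ^^ n) = M"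
proof (induct n)
  case 0 then show ?case by (simp add: id_def distr_id)
next
  case (Suc n)
  have "distr M M (\<Psi> ^^ Suc n) = distr (distr M M \<Psi>) M (\<Psi> ^^ n)"
    unfolding funpow_Suc_right by (rule distr_distr[symmetric, OF funpow_meas meas_\<Psi>])
  then show ?case by (simp only: inv Suc)
qed

lemma nn_integral_funpow:
  assumes [measurable]: "f \<in> borel_measurable M"
  shows "(\<integral>\<^sup>+x. f ((\<Psi> ^^ n) x) \<partial>M) = integral\<^sup>N M f"
proof -
  have "integral\<^sup>N (distr M M (\<Psi> ^^ n)) f = (\<integral>\<^sup>+x. f ((\<Psi> ^^ n) x) \<partial>M)"
    by (rule nn_integral_distr[OF funpow_meas]) (simp add: distr_funpow)
  then show ?thesis by (simp add: distr_funpow)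
qed

lemma measure_funpow:
  assumes [measurable]: "A \<in> sets M"
  shows "measure M ((\<Psi> ^^ n) -` A \<inter> space M) = measure M A"
proof -
  have "measure (distr M M (\<Psi> ^^ n)) A = measure M ((\<Psi> ^^ n) -` A \<inter> space M)"
    by (rule measure_distr[OF funpow_meas]) (simp add: distr_funpow)
  then show ?thesis by (simp add: distr_funpow)
qed

lemma S_enn:
  assumes n: "n \<ge> 1" and t: "\<forall>k\<in>{1..n}. t k \<ge> 1" and l: "real l > l0" and y: "y \<in> space M"
  shows "ennreal (1 / \<alpha> (real l)) * (\<Sum>k=1..n. G (t k) ((\<Psi> ^^ ((k - 1) * l + (\<Sum>j=1..k-1. t j))) y))
      \<le> G ((n - 1) * l + (\<Sum>k=1..n. t k)) y"
proof -
  define a where "a k = F (t k) ((\<Psi> ^^ ((k - 1) * l + (\<Sum>j=1..k-1. t j))) y)" for k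
  define c where "c = 1 / \<alpha> (real l)"
  have c: "c \<ge> 0" using \<alpha>_ge1[of "real l"] l by (simp add: c_def)
  have a0: "\<forall>k\<in>{1..n}. a k \<le> 0" using F_nonpos funpow_space[OF y] by (simp add: a_def)
  have SS: "F ((n - 1) * l + (\<Sum>k=1..n. t k)) y \<le> ereal c * (\<Sum>k=1..n. a k)"
    using S[OF n t l y] by (simp add: a_def c_def)
  have "enn2ereal (ennreal c * (\<Sum>k=1..n. G (t k) ((\<Psi> ^^ ((k - 1) * l + (\<Sum>j=1..k-1. t j))) y)))
      = ereal c * (\<Sum>k=1..n. - a k)"
    using a0 c
    by (simp add: times_ennreal.rep_eq sum_enn2ereal[symmetric] G_def a_def enn2ereal_e2ennreal enn2ereal_ennreal)
  also have "\<dots> = - (ereal c * (\<Sum>k=1..n. a k))"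
    using a0 by (simp add: sum_uminus_ereal)
  also have "\<dots> \<le> - F ((n - 1) * l + (\<Sum>k=1..n. t k)) y"
    using SS by simp
  also have "\<dots> = enn2ereal (G ((n - 1) * l + (\<Sum>k=1..n. t k)) y)"
    using F_nonpos[OF y] by (simp add: G_def enn2ereal_e2ennreal)
  finally show ?thesis unfolding c_def by (simp add: less_eq_ennreal.rep_eq)
qed


lemma G_shift:
  assumes l: "real l > l0" and p: "p \<ge> l + 1" and m: "m \<ge> 1" and y: "y \<in> space M"
  shows "G m ((\<Psi> ^^ p) y) \<le> ennreal (\<alpha> (real l)) * G (p + m) y"
proof -
  define t where "t k = (if k = 1 then p - l else m)" for k :: nat
  have t: "\<forall>k\<in>{1..2}. 1 \<le> t k" using p m by (auto simp: t_def)
  have a1: "\<alpha> (real l) \<ge> 1" using \<alpha>_ge1[of "real l"] l by simp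
  from S_enn[OF _ t l y]
  have "ennreal (1 / \<alpha> (real l)) * (\<Sum>k=1..2. G (t k) ((\<Psi> ^^ ((k - 1) * l + (\<Sum>j=1..k-1. t j))) y))
      \<le> G ((2 - 1) * l + (\<Sum>k=1..2. t k)) y" by simp
  also have "(2 - 1) * l + (\<Sum>k=1..2. t k) = p + m"
    using p by (simp add: t_def numeral_2_eq_2)
  also have "(\<Sum>k=1..2. G (t k) ((\<Psi> ^^ ((k - 1) * l + (\<Sum>j=1..k-1. t j))) y))
      = G (p - l) y + G m ((\<Psi> ^^ p) y)"
    using p by (simp add: t_def numeral_2_eq_2)
  finally have *: "ennreal (1 / \<alpha> (real l)) * (G (p - l) y + G m ((\<Psi> ^^ p) y)) \<le> G (p + m) y" .
  have "G m ((\<Psi> ^^ p) y) = ennreal (\<alpha> (real l)) * (ennreal (1 / \<alpha> (real l)) * G m ((\<Psi> ^^ p) y))"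
    using a1 by (simp add: ennreal_mult[symmetric] mult.assoc[symmetric])
  also have "\<dots> \<le> ennreal (\<alpha> (real l)) * (ennreal (1 / \<alpha> (real l)) * (G (p - l) y + G m ((\<Psi> ^^ p) y)))"
    by (intro mult_left_mono) (auto simp: distrib_left)
  also have "\<dots> \<le> ennreal (\<alpha> (real l)) * G (p + m) y"
    using * by (intro mult_left_mono) auto
  finally show ?thesis .
qed

lemma Ge_shift:
  assumes l: "real l > l0" and p: "p \<ge> l + 1" and m: "m \<ge> 1" and y: "y \<in> space M"
  shows "- F m ((\<Psi> ^^ p) y) \<le> ereal (\<alpha> (real l)) * (- F (p + m) y)"
proof -
  have a1: "\<alpha> (real l) \<ge> 1" using \<alpha>_ge1[of "real l"] l by simp
  have "enn2ereal (G m ((\<Psi> ^^ p) y)) \<le> enn2ereal (ennreal (\<alpha> (real l)) * G (p + m) y)"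
    using G_shift[OF assms] by (simp add: less_eq_ennreal.rep_eq)
  then show ?thesis
    using F_nonpos[OF funpow_space[OF y]] F_nonpos[OF y] a1
    by (simp add: G_def times_ennreal.rep_eq enn2ereal_e2ennreal enn2ereal_ennreal)
qed

definition ge where "ge y = limsup (\<lambda>n. (- F n y) * ereal (1 / real n))"
definition geh where "geh y = limsup (\<lambda>p. ge ((\<Psi> ^^ p) y))"

lemma ge_meas[measurable]: "ge \<in> borel_measurable M"
  unfolding ge_def using meas_F by measurable

lemma geh_meas[measurable]: "geh \<in> borel_measurable M"
  unfolding geh_def by measurable

lemma ge_nonneg: "y \<in> space M \<Longrightarrow> 0 \<le> ge y"
  unfolding ge_def
proof -
  assume y: "y \<in> space M"
  have "0 \<le> - F n y * ereal (1 / real n)" for n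
    by (rule ereal_0_le_mult) (use F_nonpos[OF y, of n] in auto)
  then show "0 \<le> limsup (\<lambda>n. - F n y * ereal (1 / real n))"
    by (intro le_Limsup) (auto intro!: always_eventually)
qed

lemma geh_inv: "geh (\<Psi> y) = geh y"
proof -
  have "geh (\<Psi> y) = limsup (\<lambda>p. ge ((\<Psi> ^^ (p + 1)) y))"
    unfolding geh_def by (simp add: funpow_Suc_right del: funpow.simps)
  also have "\<dots> = geh y" unfolding geh_def by (rule limsup_shift)
  finally show ?thesis .
qed

lemma geh_funpow: "geh ((\<Psi> ^^ j) y) = geh y"
  by (induct j) (auto simp: geh_inv)


lemma ereal_scale_aux:
  fixes a x :: ereal and al c m p :: real
  assumes a: "a \<le> ereal al * x" and x: "0 \<le> x" and al: "al \<ge> 1" and m: "m > 0" and p: "p \<ge> 0"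
    and mp: "m + p \<le> c * m"
  shows "a * ereal (1 / m) \<le> ereal (c * al) * (x * ereal (1 / (m + p)))"
proof -
  have "a * ereal (1 / m) \<le> ereal al * x * ereal (1 / m)"
    using a m by (intro ereal_mult_right_mono) auto
  also have "\<dots> \<le> ereal (c * al) * (x * ereal (1 / (m + p)))"
  proof (cases x)
    case (real r)
    have "r \<ge> 0" using x real by simp
    have "al / m \<le> c * al / (m + p)"
    proof -
      have h: "al * (m + p) \<le> al * (c * m)" using mp al by (intro mult_left_mono) auto
      then show ?thesis using m p by (simp add: field_simps distrib_left)
    qed
    then have "r * (al / m) \<le> r * (c * al / (m + p))" using \<open>r \<ge> 0\<close> by (rule mult_left_mono)
    then show ?thesis using real by (simp add: field_simps)
  next
    case PInf
    have cm: "c * m \<ge> m" using mp p by linarith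
    have "c \<ge> 1"
    proof (rule ccontr)
      assume "\<not> 1 \<le> c"
      then have "c * m < 1 * m" using m by (intro mult_strict_right_mono) auto
      then show False using cm by simp
    qed
    then show ?thesis using PInf al m p by (simp add: ereal_mult_infty ereal_infty_mult)
  next
    case MInf then show ?thesis using x by simp
  qed
  finally show ?thesis .
qed

lemma ge_shift:
  assumes l: "real l > l0" and p: "p \<ge> l + 1" and c: "c > 1" and y: "y \<in> space M"
  shows "ge ((\<Psi> ^^ p) y) \<le> ereal (c * \<alpha> (real l)) * ge y"
proof -
  define b where "b = (\<lambda>n. - F n y * ereal (1 / real n))"
  have a1: "\<alpha> (real l) \<ge> 1" using \<alpha>_ge1[of "real l"] l by simp
  obtain m1 :: nat where m1: "real p / (c - 1) \<le> real m1" using real_arch_simple by blast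
  have ev: "eventually (\<lambda>m. - F m ((\<Psi> ^^ p) y) * ereal (1 / real m) \<le> ereal (c * \<alpha> (real l)) * b (m + p)) sequentially"
    unfolding eventually_sequentially
  proof (intro exI[of _ "max 1 m1"] allI impI)
    fix m assume m: "max 1 m1 \<le> m"
    have "real p \<le> (c - 1) * real m"
    proof -
      have "real p / (c - 1) \<le> real m" using m m1 by linarith
      then show ?thesis using c by (simp add: divide_le_eq mult.commute)
    qed
    then have mp: "real m + real p \<le> c * real m" by (simp add: algebra_simps)
    have "- F m ((\<Psi> ^^ p) y) * ereal (1 / real m) \<le> ereal (c * \<alpha> (real l)) * (- F (p + m) y * ereal (1 / (real m + real p)))"
      by (rule ereal_scale_aux[OF Ge_shift[OF l p _ y] _ a1 _ _ mp]) (use m F_nonpos[OF y] in auto)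
    then show "- F m ((\<Psi> ^^ p) y) * ereal (1 / real m) \<le> ereal (c * \<alpha> (real l)) * b (m + p)"
      by (simp add: b_def add.commute)
  qed
  have "ge ((\<Psi> ^^ p) y) \<le> limsup (\<lambda>m. ereal (c * \<alpha> (real l)) * b (m + p))"
    unfolding ge_def by (rule Limsup_mono[OF ev])
  also have "\<dots> = ereal (c * \<alpha> (real l)) * limsup (\<lambda>m. b (m + p))"
    using c a1 by (intro limsup_ereal_mult_left) auto
  also have "limsup (\<lambda>m. b (m + p)) = limsup b" by (rule limsup_shift_k)
  also have "limsup b = ge y" unfolding ge_def b_def ..
  finally show ?thesis .
qed


lemma exists_l:
  assumes d: "d > 1"
  shows "\<exists>l::nat. real l > l0 \<and> \<alpha> (real l) < d"
proof -
  have "eventually (\<lambda>x. \<alpha> x < d) at_top" using order_tendstoD(2)[OF \<alpha>_lim d] .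
  then obtain X where X: "\<And>x. x \<ge> X \<Longrightarrow> \<alpha> x < d" by (auto simp: eventually_at_top_linorder)
  define l where "l = nat \<lceil>max X l0\<rceil> + 1"
  have "real l > max X l0" unfolding l_def by linarith
  then show ?thesis using X by (intro exI[of _ l]) auto
qed

lemma geh_le_d:
  assumes d: "d > 1" and y: "y \<in> space M"
  shows "geh y \<le> ereal d * ge y"
proof -
  obtain l :: nat where l: "real l > l0" "\<alpha> (real l) < d" using exists_l[OF d] by blast
  have a1: "\<alpha> (real l) \<ge> 1" using \<alpha>_ge1[of "real l"] l by simp
  define c where "c = d / \<alpha> (real l)"
  have c: "c > 1" using l a1 by (simp add: c_def)
  have cd: "c * \<alpha> (real l) = d" using a1 by (simp add: c_def)
  have "eventually (\<lambda>p. ge ((\<Psi> ^^ p) y) \<le> ereal d * ge y) sequentially"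
    unfolding eventually_sequentially
    using ge_shift[OF l(1) _ c y] cd by (intro exI[of _ "l + 1"]) auto
  then show ?thesis unfolding geh_def by (rule Limsup_bounded)
qed

lemma geh_le:
  assumes y: "y \<in> space M"
  shows "geh y \<le> ge y"
proof (cases "ge y")
  case (real r)
  have r: "r \<ge> 0" using ge_nonneg[OF y] real by simp
  show ?thesis
  proof (rule ereal_le_epsilon2)
    fix e :: real assume e: "0 < e"
    define d where "d = 1 + e / (r + 1)"
    have d: "d > 1" using e r by (simp add: d_def)
    have "d * r \<le> r + e"
    proof -
      have "e * r / (r + 1) \<le> e" using e r by (simp add: field_simps)
      then show ?thesis by (simp add: d_def field_simps)
    qed
    then show "geh y \<le> ge y + ereal e"
    proof -
      have "geh y \<le> ereal (d * r)" using geh_le_d[OF d y] real by simp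
      also have "\<dots> \<le> ereal (r + e)" using \<open>d * r \<le> r + e\<close> by simp
      finally show ?thesis using real by simp
    qed
  qed
qed (use ge_nonneg[OF y] in simp_all)


lemma int_ge_le_geh:
  "(\<integral>\<^sup>+x. e2ennreal (ge x) \<partial>M) \<le> (\<integral>\<^sup>+x. e2ennreal (geh x) \<partial>M)"
proof -
  interpret prob_space M by (rule prob)
  have trunc: "(\<integral>\<^sup>+x. min (e2ennreal (ge x)) (of_nat K) \<partial>M) \<le> (\<integral>\<^sup>+x. e2ennreal (geh x) \<partial>M)" for K :: nat
  proof -
    define u where "u p x = min (e2ennreal (ge ((\<Psi> ^^ p) x))) (of_nat K)" for p x
    have um[measurable]: "u p \<in> borel_measurable M" for p unfolding u_def by measurable
    have "limsup (\<lambda>p. integral\<^sup>N M (u p)) \<le> (\<integral>\<^sup>+ x. limsup (\<lambda>p. u p x) \<partial>M)"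
      by (rule nn_integral_limsup[where w="\<lambda>x. of_nat K"]) (auto simp: u_def emeasure_space_1 ennreal_of_nat_eq_real_of_nat)
    moreover have "integral\<^sup>N M (u p) = (\<integral>\<^sup>+x. min (e2ennreal (ge x)) (of_nat K) \<partial>M)" for p
      unfolding u_def by (rule nn_integral_funpow) measurable
    moreover have "limsup (\<lambda>p. u p x) \<le> e2ennreal (geh x)" for x
    proof -
      have "limsup (\<lambda>p. u p x) \<le> limsup (\<lambda>p. e2ennreal (ge ((\<Psi> ^^ p) x)))"
        unfolding u_def by (intro Limsup_mono always_eventually) auto
      also have "\<dots> = e2ennreal (geh x)"
        unfolding geh_def
        by (rule Limsup_compose_continuous_mono[OF continuous_on_e2ennreal mono_e2ennreal]) simp
      finally show ?thesis .
    qed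
    ultimately show ?thesis
      by (simp add: Limsup_const) (meson order_trans nn_integral_mono)
  qed
  have "(\<integral>\<^sup>+x. e2ennreal (ge x) \<partial>M) = (\<integral>\<^sup>+x. (SUP K::nat. min (e2ennreal (ge x)) (of_nat K)) \<partial>M)"
    by (simp add: SUP_min_of_nat)
  also have "\<dots> = (SUP K::nat. \<integral>\<^sup>+x. min (e2ennreal (ge x)) (of_nat K) \<partial>M)"
    by (rule nn_integral_monotone_convergence_SUP)
       (auto simp: incseq_def le_fun_def intro: min.coboundedI2)
  also have "\<dots> \<le> (\<integral>\<^sup>+x. e2ennreal (geh x) \<partial>M)"
    using trunc by (rule SUP_least)
  finally show ?thesis .
qed


lemma geh_nonneg: "y \<in> space M \<Longrightarrow> 0 \<le> geh y"
  unfolding geh_def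
  by (intro le_Limsup) (auto intro!: always_eventually ge_nonneg funpow_space)

definition phi where "phi K y = real_of_ereal (min (geh y) (ereal K))"

lemma phi_meas[measurable]: "phi K \<in> borel_measurable M"
  unfolding phi_def by measurable

lemma phi_props:
  assumes y: "y \<in> space M" and K: "K \<ge> 0"
  shows "0 \<le> phi K y" "phi K y \<le> K" "ereal (phi K y) \<le> geh y" "ereal (phi K y) = min (geh y) (ereal K)"
proof -
  have g0: "0 \<le> geh y" by (rule geh_nonneg[OF y])
  show e: "ereal (phi K y) = min (geh y) (ereal K)"
    unfolding phi_def using g0 K by (cases "geh y") (auto simp: min_def)
  show "0 \<le> phi K y" using e g0 K by (metis ereal_less_eq(5) min.bounded_iff zero_ereal_def)
  show "phi K y \<le> K" using e by (metis ereal_less_eq(3) min.cobounded2)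
  show "ereal (phi K y) \<le> geh y" using e by simp
qed

lemma phi_funpow: "phi K ((\<Psi> ^^ j) y) = phi K y"
  by (simp add: phi_def geh_funpow)

lemma ereal_lt_mult_inv:
  fixes x :: ereal
  assumes "ereal a < x * ereal (1 / real n)" "0 \<le> x" "n > 0"
  shows "ereal (real n * a) \<le> x"
proof (cases x)
  case (real r)
  then have "a < r / real n" using assms by simp
  then have "real n * a < r" using assms(3) by (simp add: field_simps)
  then show ?thesis using real by simp
qed (use assms in auto)

lemma exists_good:
  assumes y: "y \<in> space M" and K: "K \<ge> 0" and eps: "eps > 0" and m0: "m0 \<ge> 1"
  shows "\<exists>t\<ge>m0. ennreal (real t * (phi K y - eps)) \<le> G t y"
proof (cases "phi K y - eps \<le> 0")
  case True
  then have "ennreal (real m0 * (phi K y - eps)) = 0"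
    by (intro ennreal_neg) (simp add: mult_nonneg_nonpos)
  then show ?thesis by (intro exI[of _ m0]) auto
next
  case False
  define b where "b = (\<lambda>n. - F n y * ereal (1 / real n))"
  have "ereal (phi K y - eps) < ereal (phi K y)" using eps by simp
  also have "\<dots> \<le> geh y" using phi_props(3)[OF y K] .
  also have "\<dots> \<le> ge y" by (rule geh_le[OF y])
  also have "ge y = limsup (\<lambda>n. b (n + m0))" unfolding ge_def b_def by (rule limsup_shift_k[symmetric])
  finally obtain i where i: "ereal (phi K y - eps) < b (i + m0)" using Limsup_obtain by blast
  define n where "n = i + m0"
  have n: "n \<ge> m0" "n > 0" using m0 by (auto simp: n_def)
  have "ereal (real n * (phi K y - eps)) \<le> - F n y"
    by (rule ereal_lt_mult_inv) (use i n F_nonpos[OF y, of n] in \<open>auto simp: b_def n_def\<close>)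
  then have "e2ennreal (ereal (real n * (phi K y - eps))) \<le> G n y"
    unfolding G_def by (rule e2ennreal_mono)
  then show ?thesis using n by (intro exI[of _ n]) (auto simp: e2ennreal_ereal)
qed

definition goodp where
  "goodp K eps m0 Mx x \<longleftrightarrow> (\<exists>t\<in>{m0..Mx}. ennreal (real t * (phi K x - eps)) \<le> G t x)"

definition Bad where "Bad K eps m0 Mx = {x\<in>space M. \<not> goodp K eps m0 Mx x}"

lemma Bad_sets[measurable]: "Bad K eps m0 Mx \<in> sets M"
  unfolding Bad_def goodp_def by measurable

lemma Bad_measure_small:
  assumes K: "K \<ge> 0" and eps: "eps > 0" and m0: "m0 \<ge> 1" and d: "d > 0"
  shows "\<exists>Mx. measure M (Bad K eps m0 Mx) < d"
proof -
  interpret prob_space M by (rule prob)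
  have anti: "antimono_on UNIV (\<lambda>Mx. Bad K eps m0 Mx)"
    unfolding monotone_on_def Bad_def goodp_def by auto
  have "(\<lambda>Mx. measure M (Bad K eps m0 Mx)) \<longlonglongrightarrow> measure M (\<Inter>Mx. Bad K eps m0 Mx)"
    by (rule finite_Lim_measure_decseq[OF _ anti]) auto
  moreover have "(\<Inter>Mx. Bad K eps m0 Mx) = {}"
  proof -
    have "x \<notin> Bad K eps m0 t" if "x \<in> space M" "t \<ge> m0" "ennreal (real t * (phi K x - eps)) \<le> G t x" for x t
      using that by (auto simp: Bad_def goodp_def)
    then show ?thesis using exists_good[OF _ K eps m0] by (auto simp: Bad_def) blast
  qed
  ultimately have "(\<lambda>Mx. measure M (Bad K eps m0 Mx)) \<longlonglongrightarrow> 0" by simp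
  from order_tendstoD(2)[OF this d] show ?thesis by (auto dest: eventually_happens)
qed


lemma pointwise:
  assumes y: "y \<in> space M" and N: "N \<ge> 1" and l: "real l > l0" and K: "K \<ge> 0"
    and eps: "eps > 0" and m0: "m0 \<ge> 1"
  shows "ennreal (1 / \<alpha> (real l) * (real N * (phi K y - eps) - K * (real l * real N / real m0
      + real (l + 1) * real (card {j\<in>{0..<N}. (\<Psi> ^^ j) y \<in> Bad K eps m0 Mx}) + real (Mx + l + 1))))
    \<le> G N y"
proof -
  have a1: "\<alpha> (real l) \<ge> 1" using \<alpha>_ge1[of "real l"] l by simp
  have Npos: "0 < N" using N by simp
  have good: "\<exists>t. m0 \<le> t \<and> t \<le> Mx \<and> ennreal (real t * (phi K y - eps)) \<le> G t ((\<Psi> ^^ j) y)"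
    if "\<not> (\<Psi> ^^ j) y \<in> Bad K eps m0 Mx" for j
    using that funpow_space[OF y, of j] by (auto simp: Bad_def goodp_def phi_funpow)
  have cov: "\<exists>n t. 1 \<le> n \<and> (\<forall>k\<in>{1..n}. 1 \<le> t k) \<and> (n - 1) * l + (\<Sum>k=1..n. t k) = N - 0 \<and>
      ennreal (real (N - 0) * (phi K y - eps) - K * (real l * real (N - 0) / real m0
          + real (l + 1) * real (card {j\<in>{0..<N}. \<not> \<not> (\<Psi> ^^ j) y \<in> Bad K eps m0 Mx}) + real (Mx + l + 1)))
      \<le> (\<Sum>k=1..n. G (t k) ((\<Psi> ^^ (0 + (k - 1) * l + (\<Sum>j=1..k-1. t j))) y))"
    by (rule cover[where Gp="\<lambda>t j. G t ((\<Psi> ^^ j) y)" and good="\<lambda>j. \<not> (\<Psi> ^^ j) y \<in> Bad K eps m0 Mx",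
        OF m0 phi_props(2)[OF y K] less_imp_le[OF eps] K good Npos])
  then obtain n t where n: "1 \<le> n" and t: "\<forall>k\<in>{1..n}. 1 \<le> t k" and sum: "(n - 1) * l + (\<Sum>k=1..n. t k) = N"
    and ineq: "ennreal (real N * (phi K y - eps) - K * (real l * real N / real m0
          + real (l + 1) * real (card {j\<in>{0..<N}. (\<Psi> ^^ j) y \<in> Bad K eps m0 Mx}) + real (Mx + l + 1)))
      \<le> (\<Sum>k=1..n. G (t k) ((\<Psi> ^^ ((k - 1) * l + (\<Sum>j=1..k-1. t j))) y))"
    by auto
  have "ennreal (1 / \<alpha> (real l) * (real N * (phi K y - eps) - K * (real l * real N / real m0
      + real (l + 1) * real (card {j\<in>{0..<N}. (\<Psi> ^^ j) y \<in> Bad K eps m0 Mx}) + real (Mx + l + 1))))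
    = ennreal (1 / \<alpha> (real l)) * ennreal (real N * (phi K y - eps) - K * (real l * real N / real m0
      + real (l + 1) * real (card {j\<in>{0..<N}. (\<Psi> ^^ j) y \<in> Bad K eps m0 Mx}) + real (Mx + l + 1)))"
    using a1 by (intro ennreal_mult') simp
  also have "\<dots> \<le> ennreal (1 / \<alpha> (real l)) * (\<Sum>k=1..n. G (t k) ((\<Psi> ^^ ((k - 1) * l + (\<Sum>j=1..k-1. t j))) y))"
    using ineq by (intro mult_left_mono) auto
  also have "\<dots> \<le> G ((n - 1) * l + (\<Sum>k=1..n. t k)) y"
    by (rule S_enn[OF n t l y])
  also have "\<dots> = G N y" using sum by simp
  finally show ?thesis .
qed


lemma integral_funpow:
  assumes [measurable]: "f \<in> borel_measurable M"
  shows "(\<integral>x. f ((\<Psi> ^^ n) x) \<partial>M) = (integral\<^sup>L M f :: real)"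
proof -
  have "integral\<^sup>L (distr M M (\<Psi> ^^ n)) f = (\<integral>x. f ((\<Psi> ^^ n) x) \<partial>M)"
    by (rule integral_distr[OF funpow_meas]) simp
  then show ?thesis by (simp add: distr_funpow)
qed

lemma integrated:
  assumes N: "N \<ge> 1" and l: "real l > l0" and K: "K \<ge> 0" and eps: "eps > 0" and m0: "m0 \<ge> 1"
  shows "ennreal (1 / \<alpha> (real l) * (real N * ((\<integral>y. phi K y \<partial>M) - eps) - K * (real l * real N / real m0
      + real (l + 1) * real N * measure M (Bad K eps m0 Mx) + real (Mx + l + 1))))
    \<le> (\<integral>\<^sup>+y. G N y \<partial>M)"
proof -
  interpret prob_space M by (rule prob)
  define B where "B = Bad K eps m0 Mx"
  have B[measurable]: "B \<in> sets M" unfolding B_def by measurable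
  define c where "c = 1 / \<alpha> (real l)"
  define cnt where "cnt y = (\<Sum>j<N. indicator B ((\<Psi> ^^ j) y) :: real)" for y
  define h where "h y = c * (real N * (phi K y - eps) - K * (real l * real N / real m0
      + real (l + 1) * cnt y + real (Mx + l + 1)))" for y
  have cnt_meas[measurable]: "cnt \<in> borel_measurable M" unfolding cnt_def by measurable
  have int_phi: "integrable M (phi K)"
    by (rule integrable_const_bound[where B=K]) (auto simp: phi_props[OF _ K])
  have int_ind: "integrable M (\<lambda>y. indicator B ((\<Psi> ^^ j) y) :: real)" for j
    by (rule integrable_const_bound[where B=1]) (auto simp: indicator_def)
  have int_cnt: "integrable M cnt" unfolding cnt_def by (rule Bochner_Integration.integrable_sum) (rule int_ind)
  have int_cnt_val: "(\<integral>y. cnt y \<partial>M) = real N * measure M B"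
  proof -
    have "(\<integral>y. cnt y \<partial>M) = (\<Sum>j<N. \<integral>y. indicator B ((\<Psi> ^^ j) y) \<partial>M)"
      unfolding cnt_def using int_ind by (rule Bochner_Integration.integral_sum)
    also have "\<dots> = (\<Sum>j<N. measure M B)"
      by (intro sum.cong refl) (simp add: integral_funpow integral_indicator Int_absorb2 sets.sets_into_space)
    finally show ?thesis by simp
  qed
  have int_h: "integrable M h" unfolding h_def using int_phi int_cnt by auto
  have h_val: "(\<integral>y. h y \<partial>M) = c * (real N * ((\<integral>y. phi K y \<partial>M) - eps) - K * (real l * real N / real m0
      + real (l + 1) * real N * measure M B + real (Mx + l + 1)))"
    unfolding h_def using int_phi int_cnt int_cnt_val
    by (simp add: algebra_simps prob_space)
  have "ennreal (\<integral>y. h y \<partial>M) \<le> (\<integral>\<^sup>+y. ennreal (h y) \<partial>M)"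
    by (rule ennreal_integral_le_nn_integral[OF int_h])
  also have "\<dots> \<le> (\<integral>\<^sup>+y. G N y \<partial>M)"
  proof (intro nn_integral_mono)
    fix y assume y: "y \<in> space M"
    show "ennreal (h y) \<le> G N y"
      using pointwise[OF y N l K eps m0, of Mx]
      by (simp add: h_def c_def cnt_def B_def card_indicator_sum)
  qed
  finally show ?thesis using h_val by (simp add: c_def B_def)
qed


lemma nonpos_integral_G: "nonpos_integral M (F n) = - enn2ereal (\<integral>\<^sup>+y. G n y \<partial>M)"
  unfolding nonpos_integral_def G_def ..

lemma limit_bound:
  assumes lim: "(\<lambda>n. nonpos_integral M (F n) / ereal (real n)) \<longlonglongrightarrow> L"
    and bound: "\<And>N. N \<ge> 1 \<Longrightarrow> ennreal (c * (real N * Q - C)) \<le> (\<integral>\<^sup>+y. G N y \<partial>M)"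
  shows "L \<le> ereal (- (c * Q))"
proof -
  define Y where "Y N = ereal (- (c * (real N * Q - C)) / real N)" for N :: nat
  have le: "nonpos_integral M (F N) / ereal (real N) \<le> Y N" if N: "N \<ge> 1" for N
  proof -
    have "ereal (c * (real N * Q - C)) \<le> enn2ereal (ennreal (c * (real N * Q - C)))"
      by (simp add: ennreal.rep_eq)
    also have "\<dots> \<le> enn2ereal (\<integral>\<^sup>+y. G N y \<partial>M)"
      using bound[OF N] by (simp add: less_eq_ennreal.rep_eq)
    finally have "nonpos_integral M (F N) \<le> ereal (- (c * (real N * Q - C)))"
      unfolding nonpos_integral_G by (metis ereal_minus_le_minus uminus_ereal.simps(1))
    then have "nonpos_integral M (F N) / ereal (real N) \<le> ereal (- (c * (real N * Q - C))) / ereal (real N)"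
      using N by (intro ereal_divide_right_mono) auto
    then show ?thesis using N by (simp add: Y_def)
  qed
  have "(\<lambda>N. - (c * Q) + c * C * (1 / real N)) \<longlonglongrightarrow> - (c * Q) + c * C * 0"
    by (intro tendsto_intros lim_1_over_n)
  moreover have "eventually (\<lambda>N. - (c * Q) + c * C * (1 / real N) = - (c * (real N * Q - C)) / real N) sequentially"
    unfolding eventually_sequentially by (intro exI[of _ 1]) (auto simp: field_simps)
  ultimately have "(\<lambda>N. - (c * (real N * Q - C)) / real N) \<longlonglongrightarrow> - (c * Q)"
    by (simp add: tendsto_cong)
  then have Ylim: "Y \<longlonglongrightarrow> ereal (- (c * Q))" unfolding Y_def by (rule tendsto_ereal)
  show ?thesis
    by (rule LIMSEQ_le[OF lim Ylim]) (use le in auto)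
qed


lemma L_nonpos:
  assumes lim: "(\<lambda>n. nonpos_integral M (F n) / ereal (real n)) \<longlonglongrightarrow> L"
  shows "L \<le> 0"
proof (rule LIMSEQ_le_const2[OF lim], intro exI[of _ 1] allI impI)
  fix n :: nat assume n: "1 \<le> n"
  have "nonpos_integral M (F n) \<le> 0" unfolding nonpos_integral_G by simp
  then have "nonpos_integral M (F n) / ereal (real n) \<le> 0 / ereal (real n)"
    using n by (intro ereal_divide_right_mono) auto
  then show "nonpos_integral M (F n) / ereal (real n) \<le> 0" by simp
qed

lemma liminf_ge:
  "- liminf (\<lambda>n. F n y / ereal (real n)) = ge y"
proof -
  have "- liminf (\<lambda>n. F n y / ereal (real n)) = limsup (\<lambda>n. - (F n y / ereal (real n)))"
    by (simp add: ereal_Limsup_uminus)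
  also have "\<dots> = ge y" unfolding ge_def
  proof (rule Limsup_eq)
    show "\<forall>\<^sub>F n in sequentially. - (F n y / ereal (real n)) = - F n y * ereal (1 / real n)"
      unfolding eventually_sequentially
      by (intro exI[of _ 1]) (auto simp: divide_ereal_def ereal_mult_minus_left inverse_eq_divide)
  qed
  finally show ?thesis .
qed

lemma int_trunc_phi:
  "(\<integral>\<^sup>+y. min (e2ennreal (geh y)) (of_nat K) \<partial>M) = ennreal (\<integral>y. phi (real K) y \<partial>M)"
proof -
  interpret prob_space M by (rule prob)
  have "(\<integral>\<^sup>+y. min (e2ennreal (geh y)) (of_nat K) \<partial>M) = (\<integral>\<^sup>+y. ennreal (phi (real K) y) \<partial>M)"
  proof (intro nn_integral_cong)
    fix y assume y: "y \<in> space M"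
    have "ennreal (phi (real K) y) = e2ennreal (ereal (phi (real K) y))" by (simp add: e2ennreal_ereal)
    also have "\<dots> = e2ennreal (min (geh y) (ereal (real K)))" using phi_props(4)[OF y, of "real K"] by simp
    also have "\<dots> = min (e2ennreal (geh y)) (e2ennreal (ereal (real K)))"
      by (rule min_of_mono[OF mono_e2ennreal, symmetric])
    also have "\<dots> = min (e2ennreal (geh y)) (of_nat K)"
      by (simp add: e2ennreal_ereal ennreal_of_nat_eq_real_of_nat)
    finally show "min (e2ennreal (geh y)) (of_nat K) = ennreal (phi (real K) y)" by simp
  qed
  also have "\<dots> = ennreal (\<integral>y. phi (real K) y \<partial>M)"
    by (rule nn_integral_eq_integral)
       (auto intro!: integrable_const_bound[where B="real K"] simp: phi_props)
  finally show ?thesis .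
qed

lemma key:
  assumes lim: "(\<lambda>n. nonpos_integral M (F n) / ereal (real n)) \<longlonglongrightarrow> L"
    and A: "0 \<le> A" and AX: "ennreal A < (\<integral>\<^sup>+y. e2ennreal (ge y) \<partial>M)"
  shows "L \<le> ereal (- A)"
proof -
  interpret prob_space M by (rule prob)
  have "ennreal A < (\<integral>\<^sup>+y. e2ennreal (geh y) \<partial>M)" using AX int_ge_le_geh by simp
  also have "(\<integral>\<^sup>+y. e2ennreal (geh y) \<partial>M) = (SUP K::nat. \<integral>\<^sup>+y. min (e2ennreal (geh y)) (of_nat K) \<partial>M)"
  proof -
    have "(\<integral>\<^sup>+y. e2ennreal (geh y) \<partial>M) = (\<integral>\<^sup>+y. (SUP K::nat. min (e2ennreal (geh y)) (of_nat K)) \<partial>M)"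
      by (simp add: SUP_min_of_nat)
    also have "\<dots> = (SUP K::nat. \<integral>\<^sup>+y. min (e2ennreal (geh y)) (of_nat K) \<partial>M)"
      by (rule nn_integral_monotone_convergence_SUP)
         (auto simp: incseq_def le_fun_def intro: min.coboundedI2)
    finally show ?thesis .
  qed
  finally obtain K :: nat where "ennreal A < (\<integral>\<^sup>+y. min (e2ennreal (geh y)) (of_nat K) \<partial>M)"
    by (auto simp: less_SUP_iff)
  then have AP: "A < (\<integral>y. phi (real K) y \<partial>M)"
    unfolding int_trunc_phi using A by (simp add: ennreal_less_iff)
  define Phi where "Phi = (\<integral>y. phi (real K) y \<partial>M)"
  define Kr where "Kr = real K"
  have Kr: "Kr \<ge> 0" by (simp add: Kr_def)
  obtain l :: nat where l: "real l > l0" "A * \<alpha> (real l) < Phi"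
  proof (cases "A = 0")
    case True
    obtain l :: nat where "real l > l0" using exists_l[of 2] by auto
    then show ?thesis using that True AP by (simp add: Phi_def)
  next
    case False
    then have "Phi / A > 1" using A AP by (simp add: Phi_def)
    from exists_l[OF this] obtain l :: nat where "real l > l0" "\<alpha> (real l) < Phi / A" by auto
    then show ?thesis using that False A by (simp add: field_simps)
  qed
  define a where "a = \<alpha> (real l)"
  have a1: "a \<ge> 1" using \<alpha>_ge1[of "real l"] l by (simp add: a_def)
  define \<delta> where "\<delta> = Phi - A * a"
  have \<delta>: "\<delta> > 0" using l by (simp add: \<delta>_def a_def)
  define eps where "eps = \<delta> / 4"
  have eps: "eps > 0" using \<delta> by (simp add: eps_def)
  define m0 where "m0 = nat \<lceil>4 * Kr * real l / \<delta>\<rceil> + 1"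
  have m0: "m0 \<ge> 1" by (simp add: m0_def)
  have m0b: "Kr * real l / real m0 \<le> \<delta> / 4"
  proof -
    have "4 * Kr * real l / \<delta> \<le> real m0" unfolding m0_def by linarith
    then have "4 * Kr * real l \<le> real m0 * \<delta>" using \<delta> by (simp add: divide_le_eq)
    then show ?thesis using m0 by (simp add: divide_le_eq field_simps)
  qed
  define d where "d = \<delta> / (4 * (Kr * real (l + 1) + 1))"
  have "Kr * real (l + 1) \<ge> 0" using Kr by simp
  then have d: "d > 0" using \<delta> unfolding d_def by (intro divide_pos_pos) auto
  obtain Mx where Mx: "measure M (Bad Kr eps m0 Mx) < d"
    using Bad_measure_small[OF Kr eps m0 d] by blast
  define mu where "mu = measure M (Bad Kr eps m0 Mx)"
  have mu0: "mu \<ge> 0" by (simp add: mu_def)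
  have mub: "Kr * real (l + 1) * mu \<le> \<delta> / 4"
  proof -
    have "Kr * real (l + 1) * mu \<le> (Kr * real (l + 1) + 1) * mu" using mu0 by (simp add: algebra_simps)
    also have "\<dots> \<le> (Kr * real (l + 1) + 1) * d" using Mx Kr by (intro mult_left_mono) (auto simp: mu_def)
    also have "\<dots> = \<delta> / 4"
    proof -
      have gen: "z * (\<delta> / (4 * z)) = \<delta> / 4" if "z \<noteq> 0" for z :: real using that by (simp add: field_simps)
      have "Kr * real (l + 1) + 1 \<noteq> 0" using \<open>Kr * real (l + 1) \<ge> 0\<close> by linarith
      from gen[OF this] show ?thesis by (simp add: d_def)
    qed
    finally show ?thesis .
  qed
  define Q where "Q = Phi - eps - Kr * real l / real m0 - Kr * real (l + 1) * mu"
  have Q: "Q > A * a"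
  proof -
    have "Q = Phi - \<delta> / 4 - Kr * real l / real m0 - Kr * real (l + 1) * mu" by (simp add: Q_def eps_def)
    moreover have "A * a = Phi - \<delta>" by (simp add: \<delta>_def)
    ultimately show ?thesis using m0b mub \<delta> by linarith
  qed
  have "L \<le> ereal (- (1 / a * Q))"
  proof (rule limit_bound[OF lim])
    fix N :: nat assume N: "N \<ge> 1"
    have eq: "real N * (Phi - eps) - Kr * (real l * real N / real m0 + real (l + 1) * real N * mu + real (Mx + l + 1))
        = real N * Q - Kr * real (Mx + l + 1)"
      by (simp add: Q_def algebra_simps)
    show "ennreal (1 / a * (real N * Q - Kr * real (Mx + l + 1))) \<le> (\<integral>\<^sup>+y. G N y \<partial>M)"
      using integrated[OF N l(1) Kr eps m0, of Mx] unfolding eq[symmetric]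
      by (simp add: a_def Phi_def mu_def Kr_def)
  qed
  also have "1 / a * Q \<ge> A" using Q a1 by (simp add: field_simps)
  then have "ereal (- (1 / a * Q)) \<le> ereal (- A)" by simp
  finally show ?thesis .
qed

lemma main:
  assumes lim: "(\<lambda>n. nonpos_integral M (F n) / ereal (real n)) \<longlonglongrightarrow> L"
  shows "L \<le> nonpos_integral M (\<lambda>y. liminf (\<lambda>n. F n y / ereal (real n)))"
proof -
  define X where "X = (\<integral>\<^sup>+y. e2ennreal (ge y) \<partial>M)"
  have rhs: "nonpos_integral M (\<lambda>y. liminf (\<lambda>n. F n y / ereal (real n))) = - enn2ereal X"
    unfolding nonpos_integral_def X_def liminf_ge ..
  have L0: "L \<le> 0" by (rule L_nonpos[OF lim])
  have keyX: "L \<le> ereal (- A)" if "0 \<le> A" "ennreal A < X" for A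
    using key[OF lim that[unfolded X_def]] .
  show ?thesis
  proof (cases "X = \<top>")
    case True
    have "L = - \<infinity>"
    proof (cases L)
      case (real r)
      have "L \<le> ereal (- (\<bar>r\<bar> + 1))" using keyX[of "\<bar>r\<bar> + 1"] True by simp
      then show ?thesis using real by simp
    next
      case PInf then show ?thesis using L0 by simp
    qed simp
    then show ?thesis by simp
  next
    case False
    then obtain x where x: "X = ennreal x" "x \<ge> 0" by (cases X) auto
    have "L \<le> ereal (- x)"
    proof (rule ereal_le_epsilon2)
      fix e :: real assume e: "0 < e"
      show "L \<le> ereal (- x) + ereal e"
      proof (cases "e \<ge> x")
        case True
        have h: "(0::ereal) \<le> ereal (- x) + ereal e" using True by simp
        show ?thesis using order_trans[OF L0 h] .
      next
        case False
        have "L \<le> ereal (- (x - e))" using keyX[of "x - e"] False e x by (simp add: ennreal_lessI)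
        then show ?thesis by simp
      qed
    qed
    then show ?thesis using x by (simp add: rhs)
  qed
qed

end


theorem propositionD1:
  fixes M :: "'a measure" and \<Psi> :: "'a \<Rightarrow> 'a"
    and F :: "nat \<Rightarrow> 'a \<Rightarrow> ereal"
    and l0 :: real and \<alpha> :: "real \<Rightarrow> real" and L :: ereal
  assumes prob: "prob_space M"
    and meas_\<Psi>: "\<Psi> \<in> M \<rightarrow>\<^sub>M M"
    and inv: "distr M M \<Psi> = M"
    and meas_F: "\<And>n. F n \<in> borel_measurable M"
    and F_nonpos: "\<And>n y. y \<in> space M \<Longrightarrow> F n y \<le> 0"
    and l0_nonneg: "l0 \<ge> 0"
    and \<alpha>_ge1: "\<And>l. l \<ge> l0 \<Longrightarrow> \<alpha> l \<ge> 1"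
    and \<alpha>_antimono: "\<And>l l'. l0 \<le> l \<Longrightarrow> l \<le> l' \<Longrightarrow> \<alpha> l' \<le> \<alpha> l"
    and \<alpha>_lim: "(\<alpha> \<longlongrightarrow> 1) at_top"
    and S: "\<And>n (t :: nat \<Rightarrow> nat) (l :: nat) y.
              n \<ge> 1 \<Longrightarrow> (\<forall>k\<in>{1..n}. t k \<ge> 1) \<Longrightarrow> real l > l0 \<Longrightarrow> y \<in> space M \<Longrightarrow>
              F ((n - 1) * l + (\<Sum>k=1..n. t k)) y
                \<le> ereal (1 / \<alpha> (real l)) *
                   (\<Sum>k=1..n. F (t k) ((\<Psi> ^^ ((k - 1) * l + (\<Sum>j=1..k-1. t j))) y))"
    and lim: "(\<lambda>n. nonpos_integral M (F n) / ereal (real n)) \<longlonglongrightarrow> L"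
  shows "L \<le> nonpos_integral M (\<lambda>y. liminf (\<lambda>n. F n y / ereal (real n)))"
  proof -
  interpret sys M \<Psi> F l0 \<alpha>
    by (rule sys.intro[OF prob meas_\<Psi> inv meas_F F_nonpos l0_nonneg \<alpha>_ge1 \<alpha>_lim S])
  show ?thesis by (rule main[OF lim])
qed

end
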